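(* Let $n\ge3$ and let $G$ be a connected graph with at least two vertices, and assume it is not the case that both $G\cong K_2$ and $n=3$. Then $G\times K_n$ is super edge connected if and only if $n\,\kappa'(G)>\delta(G)$.
   Context: All graphs are finite, simple and undirected. $\kappa'(G)$ denotes edge connectivity and $\delta(G)$ minimum degree. The direct product $G\times H$ has vertex set $V(G)\times V(H)$. Two vertices $(x,u),(y,v)$ are adjacent if and only if $xy\in E(G)$ and $uv\in E(H)$. A minimum edge cut of a graph is a set of edges whose removal disconnects the graph and whose cardinality equals its edge connectivity. A graph is super edge connected if every minimum edge cut is the set of all edges incident with some single vertex. *)

theory Defs
  imports Main
begin

definition simple_graph :: "'a set \<Rightarrow> 'a set set \<Rightarrow> bool" where
  "simple_graph V E \<longleftrightarrow> finite V \<and>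
     (\<forall>e\<in>E. \<exists>x y. x \<noteq> y \<and> x \<in> V \<and> y \<in> V \<and> e = {x, y})"

definition adj :: "'a set set \<Rightarrow> 'a \<Rightarrow> 'a \<Rightarrow> bool" where
  "adj E x y \<longleftrightarrow> {x, y} \<in> E"

definition connected_graph :: "'a set \<Rightarrow> 'a set set \<Rightarrow> bool" where
  "connected_graph V E \<longleftrightarrow> V \<noteq> {} \<and>
     (\<forall>x\<in>V. \<forall>y\<in>V. (\<lambda>a b. a \<in> V \<and> b \<in> V \<and> adj E a b)\<^sup>*\<^sup>* x y)"

definition incident_edges :: "'a set set \<Rightarrow> 'a \<Rightarrow> 'a set set" where
  "incident_edges E v = {e \<in> E. v \<in> e}"

definition degree :: "'a set set \<Rightarrow> 'a \<Rightarrow> nat" where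
  "degree E v = card (incident_edges E v)"

definition min_degree :: "'a set \<Rightarrow> 'a set set \<Rightarrow> nat" where
  "min_degree V E = Min (degree E ` V)"

definition is_edge_cut :: "'a set \<Rightarrow> 'a set set \<Rightarrow> 'a set set \<Rightarrow> bool" where
  "is_edge_cut V E S \<longleftrightarrow> S \<subseteq> E \<and> \<not> connected_graph V (E - S)"

definition edge_connectivity :: "'a set \<Rightarrow> 'a set set \<Rightarrow> nat" where
  "edge_connectivity V E = Min (card ` {S. is_edge_cut V E S})"

definition is_min_edge_cut :: "'a set \<Rightarrow> 'a set set \<Rightarrow> 'a set set \<Rightarrow> bool" where
  "is_min_edge_cut V E S \<longleftrightarrow> is_edge_cut V E S \<and> card S = edge_connectivity V E"

definition super_edge_connected :: "'a set \<Rightarrow> 'a set set \<Rightarrow> bool" where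
  "super_edge_connected V E \<longleftrightarrow>
     (\<forall>S. is_min_edge_cut V E S \<longrightarrow> (\<exists>v\<in>V. S = incident_edges E v))"

definition dprod_verts :: "'a set \<Rightarrow> 'b set \<Rightarrow> ('a \<times> 'b) set" where
  "dprod_verts V W = V \<times> W"

definition dprod_edges :: "'a set set \<Rightarrow> 'b set set \<Rightarrow> ('a \<times> 'b) set set" where
  "dprod_edges E F = {{(x, u), (y, v)} | x y u v. {x, y} \<in> E \<and> {u, v} \<in> F}"

definition K_verts :: "nat \<Rightarrow> nat set" where
  "K_verts n = {..<n}"

definition K_edges :: "nat \<Rightarrow> nat set set" where
  "K_edges n = {{i, j} | i j. i < n \<and> j < n \<and> i \<noteq> j}"

definition graph_iso :: "'a set \<Rightarrow> 'a set set \<Rightarrow> 'b set \<Rightarrow> 'b set set \<Rightarrow> bool" where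
  "graph_iso V E W F \<longleftrightarrow> (\<exists>f. bij_betw f V W \<and>
     (\<forall>x\<in>V. \<forall>y\<in>V. {x, y} \<in> E \<longleftrightarrow> {f x, f y} \<in> F))"

end

theory Submission
  imports Defs
begin



definition Pc :: "nat \<Rightarrow> nat set \<Rightarrow> nat set \<Rightarrow> (nat \<times> nat) set" where
  "Pc n A B = {(u,v). u < n \<and> v < n \<and> u \<noteq> v \<and> (u \<in> A \<longleftrightarrow> v \<notin> B)}"

lemma Pc_finite: "finite (Pc n A B)"
  by (rule finite_subset[of _ "{..<n} \<times> {..<n}"]) (auto simp: Pc_def)

lemma Pc_snd_le: "card (snd ` Pc n A B) \<le> card (Pc n A B)"
  by (rule card_image_le[OF Pc_finite])

lemma Pc_snd_less:
  assumes "(u,v) \<in> Pc n A B" "(u',v) \<in> Pc n A B" "u \<noteq> u'"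
  shows "card (snd ` Pc n A B) < card (Pc n A B)"
proof -
  have "\<not> inj_on snd (Pc n A B)" using assms unfolding inj_on_def by force
  then have "card (snd ` Pc n A B) \<noteq> card (Pc n A B)"
    using eq_card_imp_inj_on[OF Pc_finite] by blast
  with Pc_snd_le show ?thesis by (meson le_neq_implies_less)
qed

lemma Pc_snd_mem: "v < n \<Longrightarrow> u < n \<Longrightarrow> u \<noteq> v \<Longrightarrow> (u \<in> A \<longleftrightarrow> v \<notin> B) \<Longrightarrow> v \<in> snd ` Pc n A B"
  by (rule image_eqI[of _ _ "(u,v)"]) (auto simp: Pc_def)

lemma card_lessThan_minus: "n - 1 \<le> card ({..<n::nat} - {w})"
  by (simp add: card_Diff_singleton_if)

lemma Pc_bound1:
  assumes "\<And>v. v < n \<Longrightarrow> v \<noteq> w \<Longrightarrow> \<exists>u<n. u \<noteq> v \<and> (u \<in> A \<longleftrightarrow> v \<notin> B)"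
  shows "n - 1 \<le> card (snd ` Pc n A B)"
proof -
  have "{..<n} - {w} \<subseteq> snd ` Pc n A B"
    using assms Pc_snd_mem by blast
  then have "card ({..<n} - {w}) \<le> card (snd ` Pc n A B)"
    by (intro card_mono) (auto intro: finite_imageI Pc_finite)
  with card_lessThan_minus[of n w] show ?thesis by linarith
qed

lemma Pc_bound0:
  assumes "\<And>v. v < n \<Longrightarrow> \<exists>u<n. u \<noteq> v \<and> (u \<in> A \<longleftrightarrow> v \<notin> B)"
  shows "n \<le> card (snd ` Pc n A B)"
proof -
  have "{..<n} \<subseteq> snd ` Pc n A B"
    using assms Pc_snd_mem by blast
  then have "card ({..<n}) \<le> card (snd ` Pc n A B)"
    by (intro card_mono) (auto intro: finite_imageI Pc_finite)
  then show ?thesis by simp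
qed

lemma avoid2: "3 \<le> (n::nat) \<Longrightarrow> \<exists>u<n. u \<noteq> a \<and> u \<noteq> b"
  by presburger

lemma avoid2b: "4 \<le> (n::nat) \<Longrightarrow> \<exists>u u'. u<n \<and> u' < n \<and> u \<noteq> u' \<and> u \<noteq> a \<and> u \<noteq> b \<and> u' \<noteq> a \<and> u' \<noteq> b"
  by presburger

lemma F1:
  assumes n3: "3 \<le> n" and A: "A \<subseteq> {..<n}" and u0: "u0 \<in> A" and u1: "u1 < n" "u1 \<notin> A"
  shows "n - 1 \<le> card (Pc n A B)"
proof -
  have "n - 1 \<le> card (snd ` Pc n A B)"
  proof (cases "\<exists>w. A = {w}")
    case True
    then obtain w where w: "A = {w}" by blast
    show ?thesis
    proof (rule Pc_bound1[of _ w])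
      fix v assume v: "v < n" "v \<noteq> w"
      show "\<exists>u<n. u \<noteq> v \<and> (u \<in> A \<longleftrightarrow> v \<notin> B)"
      proof (cases "v \<in> B")
        case True
        obtain u where "u < n" "u \<noteq> w" "u \<noteq> v" using avoid2[OF n3] by blast
        then show ?thesis using True w by blast
      next
        case False
        then show ?thesis using w v A by auto
      qed
    qed
  next
    case notsing: False
    show ?thesis
    proof (cases "\<exists>w. {..<n} - A = {w}")
      case True
      then obtain w where w: "{..<n} - A = {w}" by blast
      show ?thesis
      proof (rule Pc_bound1[of _ w])
        fix v assume v: "v < n" "v \<noteq> w"
        show "\<exists>u<n. u \<noteq> v \<and> (u \<in> A \<longleftrightarrow> v \<notin> B)"
        proof (cases "v \<in> B")
          case True
          have "w < n" "w \<notin> A" using w by auto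
          then show ?thesis using True v by blast
        next
          case False
          obtain u where "u < n" "u \<noteq> w" "u \<noteq> v" using avoid2[OF n3] by blast
          then have "u \<in> A" using w by blast
          then show ?thesis using False \<open>u < n\<close> \<open>u \<noteq> v\<close> by blast
        qed
      qed
    next
      case False
      show ?thesis
      proof (rule Pc_bound1[of _ u0])
        fix v assume v: "v < n" "v \<noteq> u0"
        show "\<exists>u<n. u \<noteq> v \<and> (u \<in> A \<longleftrightarrow> v \<notin> B)"
        proof (cases "v \<in> B")
          case True
          have "\<exists>u. u \<in> {..<n} - A \<and> u \<noteq> v"
          proof (rule ccontr)
            assume "\<not> ?thesis"
            then have "{..<n} - A = {v}" using u1 by blast
            then show False using False by blast
          qed
          then show ?thesis using True by blast
        next
          case f: False
          have "\<exists>u. u \<in> A \<and> u \<noteq> v"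
          proof (rule ccontr)
            assume "\<not> ?thesis"
            then have "A = {v}" using u0 by blast
            then show False using notsing by blast
          qed
          then show ?thesis using f A by blast
        qed
      qed
    qed
  qed
  then show ?thesis using Pc_snd_le[of n A B] by linarith
qed

lemma F2:
  assumes n4: "4 \<le> n" and A: "A \<subseteq> {..<n}" and u0: "u0 \<in> A" and u1: "u1 < n" "u1 \<notin> A"
    and B: "B \<subseteq> {..<n}" and w0: "w0 \<in> B" and w1: "w1 < n" "w1 \<notin> B"
  shows "n \<le> card (Pc n A B)"
proof (cases "\<forall>v<n. \<exists>u<n. u \<noteq> v \<and> (u \<in> A \<longleftrightarrow> v \<notin> B)")
  case True
  then have "n \<le> card (snd ` Pc n A B)" by (intro Pc_bound0) auto
  then show ?thesis using Pc_snd_le[of n A B] by linarith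
next
  case False
  then obtain v0 where v0: "v0 < n" "\<forall>u<n. u \<noteq> v0 \<longrightarrow> \<not> (u \<in> A \<longleftrightarrow> v0 \<notin> B)" by blast
  show ?thesis
  proof (cases "v0 \<in> B")
    case False
    have Aeq: "\<And>u. u < n \<Longrightarrow> u \<noteq> v0 \<Longrightarrow> u \<notin> A" using v0 False by blast
    have "n - 1 \<le> card (snd ` Pc n A B)"
    proof (rule Pc_bound1[of _ v0])
      fix v assume v: "v < n" "v \<noteq> v0"
      have v0A: "v0 \<in> A" using Aeq u0 A by blast
      show "\<exists>u<n. u \<noteq> v \<and> (u \<in> A \<longleftrightarrow> v \<notin> B)"
      proof (cases "v \<in> B")
        case True
        obtain u where "u < n" "u \<noteq> v0" "u \<noteq> v" using avoid2[of n v0 v] n4 by auto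
        then show ?thesis using True Aeq by blast
      next
        case f: False
        then show ?thesis using v v0A v0 by blast
      qed
    qed
    moreover
    obtain u u' where uu: "u<n" "u' < n" "u \<noteq> u'" "u \<noteq> v0" "u \<noteq> w0" "u' \<noteq> v0" "u' \<noteq> w0"
      using avoid2b[OF n4] by blast
    have "w0 < n" using w0 B by auto
    have "(u,w0) \<in> Pc n A B" "(u',w0) \<in> Pc n A B"
      using uu Aeq w0 \<open>w0 < n\<close> by (auto simp: Pc_def)
    then have "card (snd ` Pc n A B) < card (Pc n A B)" using Pc_snd_less uu by blast
    ultimately show ?thesis using n4 by linarith
  next
    case True
    have Aeq: "\<And>u. u < n \<Longrightarrow> u \<noteq> v0 \<Longrightarrow> u \<in> A" using v0 True by blast
    have "n - 1 \<le> card (snd ` Pc n A B)"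
    proof (rule Pc_bound1[of _ v0])
      fix v assume v: "v < n" "v \<noteq> v0"
      have v0A: "v0 \<notin> A" using Aeq u1 by blast
      show "\<exists>u<n. u \<noteq> v \<and> (u \<in> A \<longleftrightarrow> v \<notin> B)"
      proof (cases "v \<in> B")
        case True
        then show ?thesis using v v0A v0 by blast
      next
        case f: False
        obtain u where "u < n" "u \<noteq> v0" "u \<noteq> v" using avoid2[of n v0 v] n4 by auto
        then show ?thesis using f Aeq by blast
      qed
    qed
    moreover
    obtain u u' where uu: "u<n" "u' < n" "u \<noteq> u'" "u \<noteq> v0" "u \<noteq> w1" "u' \<noteq> v0" "u' \<noteq> w1"
      using avoid2b[OF n4] by blast
    have "(u,w1) \<in> Pc n A B" "(u',w1) \<in> Pc n A B"
      using uu Aeq w1 by (auto simp: Pc_def)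
    then have "card (snd ` Pc n A B) < card (Pc n A B)" using Pc_snd_less uu by blast
    ultimately show ?thesis using n4 by linarith
  qed
qed

lemma F3:
  assumes A: "A \<subseteq> {..<n}" and u: "u \<in> A" "u' \<in> A" "u \<noteq> u'" and u1: "u1 < n" "u1 \<notin> A"
  shows "n \<le> card (Pc n A {})"
proof -
  have "n \<le> card (snd ` Pc n A {})"
  proof (rule Pc_bound0)
    fix v assume "v < n"
    show "\<exists>u<n. u \<noteq> v \<and> (u \<in> A \<longleftrightarrow> v \<notin> {})" using u A by (cases "u = v") auto
  qed
  moreover have "(u,u1) \<in> Pc n A {}" "(u',u1) \<in> Pc n A {}" using u u1 A by (auto simp: Pc_def)
  then have "card (snd ` Pc n A {}) < card (Pc n A {})" using Pc_snd_less u by blast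
  ultimately show ?thesis by linarith
qed

lemma F3':
  assumes A: "A \<subseteq> {..<n}" and u: "u < n" "u' < n" "u \<notin> A" "u' \<notin> A" "u \<noteq> u'" and u0: "u0 \<in> A"
  shows "n \<le> card (Pc n A {..<n})"
proof -
  have "n \<le> card (snd ` Pc n A {..<n})"
  proof (rule Pc_bound0)
    fix v assume "v < n"
    show "\<exists>w<n. w \<noteq> v \<and> (w \<in> A \<longleftrightarrow> v \<notin> {..<n})" using u \<open>v < n\<close> by (cases "u = v") auto
  qed
  moreover have "(u,u0) \<in> Pc n A {..<n}" "(u',u0) \<in> Pc n A {..<n}" using u u0 A by (auto simp: Pc_def)
  then have "card (snd ` Pc n A {..<n}) < card (Pc n A {..<n})" using Pc_snd_less u by blast
  ultimately show ?thesis by linarith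
qed

definition offd :: "nat \<Rightarrow> (nat \<times> nat) set" where
  "offd n = {(u,v). u < n \<and> v < n \<and> u \<noteq> v}"

lemma card_offd: "card (offd n) = n * n - n"
proof -
  have "offd n = {..<n} \<times> {..<n} - (\<lambda>u. (u,u)) ` {..<n}" by (auto simp: offd_def)
  moreover have "card ((\<lambda>u. (u,u)) ` {..<n}) = n" by (subst card_image) (auto simp: inj_on_def)
  moreover have "(\<lambda>u. (u,u)) ` {..<n} \<subseteq> {..<n} \<times> {..<n}" by auto
  ultimately show ?thesis by (simp add: card_Diff_subset card_cartesian_product finite_subset)
qed

lemma Pc_empty_full: "Pc n {} {..<n} = offd n" "Pc n {..<n} {} = offd n"
  by (auto simp: Pc_def offd_def)




definition bdry :: "'b set set \<Rightarrow> 'b set \<Rightarrow> 'b set set" where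
  "bdry F X = {h \<in> F. \<exists>p q. h = {p,q} \<and> p \<in> X \<and> q \<notin> X}"

abbreviation rel :: "'b set \<Rightarrow> 'b set set \<Rightarrow> 'b \<Rightarrow> 'b \<Rightarrow> bool" where
  "rel W F \<equiv> (\<lambda>a b. a \<in> W \<and> b \<in> W \<and> adj F a b)"

lemma X_to_cut:
  assumes X: "X \<subseteq> W" "a \<in> X" "b \<in> W" "b \<notin> X"
  shows "is_edge_cut W F (bdry F X)"
proof -
  have "(rel W (F - bdry F X))\<^sup>*\<^sup>* a z \<Longrightarrow> z \<in> X" for z
  proof (induction rule: rtranclp_induct)
    case base then show ?case using X by simp
  next
    case (step y z)
    show ?case
    proof (rule ccontr)
      assume "z \<notin> X"
      then have "{y,z} \<in> bdry F X" using step unfolding adj_def bdry_def by blast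
      then show False using step unfolding adj_def by blast
    qed
  qed
  then show ?thesis unfolding is_edge_cut_def connected_graph_def bdry_def using X by blast
qed

lemma cut_to_X:
  assumes W: "W \<noteq> {}" and F: "\<forall>h\<in>F. h \<subseteq> W" and S: "is_edge_cut W F S"
  shows "\<exists>X \<subseteq> W. X \<noteq> {} \<and> W - X \<noteq> {} \<and> bdry F X \<subseteq> S"
proof -
  obtain a b where ab: "a \<in> W" "b \<in> W" "\<not> (rel W (F - S))\<^sup>*\<^sup>* a b"
    using S W unfolding is_edge_cut_def connected_graph_def by blast
  define X where "X = {z. (rel W (F - S))\<^sup>*\<^sup>* a z}"
  have XW: "X \<subseteq> W"
  proof
    fix z assume "z \<in> X"
    then have "(rel W (F - S))\<^sup>*\<^sup>* a z" by (simp add: X_def)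
    then show "z \<in> W" by (induction rule: rtranclp_induct) (use ab in auto)
  qed
  have "bdry F X \<subseteq> S"
  proof
    fix h assume "h \<in> bdry F X"
    then obtain p q where h: "h \<in> F" "h = {p,q}" "p \<in> X" "q \<notin> X" unfolding bdry_def by blast
    show "h \<in> S"
    proof (rule ccontr)
      assume "h \<notin> S"
      then have "rel W (F - S) p q" using h F XW unfolding adj_def by auto
      then have "q \<in> X" using h(3) unfolding X_def by (simp add: rtranclp.rtrancl_into_rtrancl)
      then show False using h by blast
    qed
  qed
  moreover have "a \<in> X" by (simp add: X_def)
  moreover have "b \<in> W - X" using ab by (simp add: X_def)
  ultimately show ?thesis using XW by blast
qed

lemma path_cross:
  assumes "(rel W F)\<^sup>*\<^sup>* a b" "a \<in> U" "b \<notin> U"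
  shows "\<exists>x y. {x,y} \<in> F \<and> x \<in> U \<and> y \<notin> U"
  using assms
proof (induction rule: rtranclp_induct)
  case base then show ?case by simp
next
  case (step y z)
  then show ?case by (cases "y \<in> U") (auto simp: adj_def)
qed

lemma ec_finite: "finite F \<Longrightarrow> finite (card ` {S. is_edge_cut W F S})"
  by (rule finite_imageI, rule finite_subset[of _ "Pow F"]) (auto simp: is_edge_cut_def)

lemma ec_le: "finite F \<Longrightarrow> is_edge_cut W F S \<Longrightarrow> edge_connectivity W F \<le> card S"
  unfolding edge_connectivity_def by (rule Min_le[OF ec_finite]) auto

lemma ec_attained:
  assumes "finite F" "is_edge_cut W F S0"
  shows "\<exists>S. is_edge_cut W F S \<and> card S = edge_connectivity W F"
proof -
  have "edge_connectivity W F \<in> card ` {S. is_edge_cut W F S}"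
    unfolding edge_connectivity_def by (rule Min_in[OF ec_finite[OF assms(1)]]) (use assms in auto)
  then show ?thesis by auto
qed

lemma ec_ge:
  assumes "finite F" "is_edge_cut W F S0" "\<And>S. is_edge_cut W F S \<Longrightarrow> k \<le> card S"
  shows "k \<le> edge_connectivity W F"
  using ec_attained[OF assms(1,2)] assms(3) by metis




lemma finite_offd: "finite (offd n)"
  by (rule finite_subset[of _ "{..<n} \<times> {..<n}"]) (auto simp: offd_def)

lemma two_set_eq: "e = {a,b} \<Longrightarrow> c \<in> e \<Longrightarrow> d \<in> e \<Longrightarrow> c \<noteq> d \<Longrightarrow> e = {c,d}"
  by auto

locale pg =
  fixes V :: "'a set" and E :: "'a set set" and n :: nat
  assumes sg: "simple_graph V E" and n3: "3 \<le> n"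
begin

abbreviation "VH \<equiv> V \<times> {..<n}"
abbreviation "EH \<equiv> dprod_edges E (K_edges n)"

lemma finV: "finite V" using sg by (simp add: simple_graph_def)

lemma E_two: "e \<in> E \<Longrightarrow> \<exists>x y. x \<noteq> y \<and> x \<in> V \<and> y \<in> V \<and> e = {x,y}"
  using sg by (simp add: simple_graph_def)

lemma E_ne: "{x,y} \<in> E \<Longrightarrow> x \<noteq> y \<and> x \<in> V \<and> y \<in> V"
  using E_two[of "{x,y}"] by (auto simp: doubleton_eq_iff)

lemma finE: "finite E"
proof -
  have "E \<subseteq> Pow V" using E_two by blast
  then show ?thesis using finV by (meson finite_Pow_iff finite_subset)
qed

lemma K_iff: "{u,v} \<in> K_edges n \<longleftrightarrow> u < n \<and> v < n \<and> u \<noteq> v"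
  unfolding K_edges_def by (auto simp: doubleton_eq_iff)

lemma EH_iff: "h \<in> EH \<longleftrightarrow> (\<exists>x y u v. h = {(x,u),(y,v)} \<and> {x,y} \<in> E \<and> u < n \<and> v < n \<and> u \<noteq> v)"
  unfolding dprod_edges_def using K_iff by blast

lemma EH_two: "h \<in> EH \<Longrightarrow> \<exists>p q. p \<noteq> q \<and> p \<in> VH \<and> q \<in> VH \<and> h = {p,q}"
  unfolding EH_iff using E_ne by fastforce

lemma EH_sub: "h \<in> EH \<Longrightarrow> h \<subseteq> VH"
  using EH_two by blast

lemma finEH: "finite EH"
proof -
  have "EH \<subseteq> Pow VH" using EH_sub by blast
  then show ?thesis using finV by (meson finite_Pow_iff finite_subset finite_SigmaI finite_lessThan)
qed

definition fib :: "('a \<times> nat) set \<Rightarrow> 'a \<Rightarrow> nat set" where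
  "fib X x = {u. u < n \<and> (x,u) \<in> X}"

definition layer :: "'a set \<Rightarrow> ('a \<times> nat) set set" where
  "layer e = {h. \<exists>p q. h = {p,q} \<and> fst p \<in> e \<and> fst q \<in> e \<and> fst p \<noteq> fst q}"

definition f :: "('a \<times> nat) set \<Rightarrow> 'a set \<Rightarrow> nat" where
  "f X e = card (bdry EH X \<inter> layer e)"

lemma fib_sub: "fib X x \<subseteq> {..<n}" by (auto simp: fib_def)

lemma layer_disj:
  assumes "e \<in> E" "e' \<in> E" "e \<noteq> e'"
  shows "layer e \<inter> layer e' = {}"
proof (rule ccontr)
  assume "layer e \<inter> layer e' \<noteq> {}"
  then obtain h where hh: "h \<in> layer e" "h \<in> layer e'" by blast
  from hh(1) obtain p q where h1: "h = {p,q}" "fst p \<in> e" "fst q \<in> e" "fst p \<noteq> fst q"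
    unfolding layer_def by blast
  from hh(2) obtain p' q' where h2: "h = {p',q'}" "fst p' \<in> e'" "fst q' \<in> e'" "fst p' \<noteq> fst q'"
    unfolding layer_def by blast
  obtain a b where ab: "e = {a,b}" using E_two assms by blast
  obtain a' b' where ab': "e' = {a',b'}" using E_two assms by blast
  have "e = {fst p, fst q}" using two_set_eq[OF ab h1(2,3,4)] .
  moreover have "e' = {fst p', fst q'}" using two_set_eq[OF ab' h2(2,3,4)] .
  moreover have "{p,q} = {p',q'}" using h1(1) h2(1) by simp
  then have "(p = p' \<and> q = q') \<or> (p = q' \<and> q = p')" by (simp add: doubleton_eq_iff)
  then have "{fst p, fst q} = {fst p', fst q'}" by auto
  ultimately show False using assms by simp
qed

lemma sum_le:
  assumes "F \<subseteq> E"
  shows "(\<Sum>e\<in>F. f X e) \<le> card (bdry EH X)"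
proof -
  have finF: "finite F" using assms finE finite_subset by blast
  have fb: "finite (bdry EH X)" using finEH by (simp add: bdry_def)
  have "card (\<Union>e\<in>F. bdry EH X \<inter> layer e) = (\<Sum>e\<in>F. card (bdry EH X \<inter> layer e))"
    by (rule card_UN_disjoint[OF finF]) (use fb layer_disj assms in blast)+
  moreover have "card (\<Union>e\<in>F. bdry EH X \<inter> layer e) \<le> card (bdry EH X)"
    by (rule card_mono[OF fb]) blast
  ultimately show ?thesis by (simp add: f_def)
qed

lemma layer_Pc:
  assumes e: "{x,y} \<in> E"
  shows "card (Pc n (fib X x) (fib X y)) \<le> f X {x,y}"
proof -
  have xy: "x \<noteq> y" using E_ne e by blast
  define g where "g = (\<lambda>(u,v). {(x,u::nat),(y,v::nat)})"
  have inj: "inj_on g (Pc n (fib X x) (fib X y))"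
  proof (rule inj_onI)
    fix a b assume ab: "g a = g b"
    obtain u v where a: "a = (u,v)" by (cases a)
    obtain u' v' where b: "b = (u',v')" by (cases b)
    have "{(x,u),(y,v)} = {(x,u'),(y,v')}" using ab a b by (simp add: g_def)
    then have "u = u' \<and> v = v'" using xy by (simp add: doubleton_eq_iff)
    then show "a = b" using a b by simp
  qed
  have sub: "g ` Pc n (fib X x) (fib X y) \<subseteq> bdry EH X \<inter> layer {x,y}"
  proof
    fix h assume "h \<in> g ` Pc n (fib X x) (fib X y)"
    then obtain u v where uv: "u < n" "v < n" "u \<noteq> v" "(u \<in> fib X x \<longleftrightarrow> v \<notin> fib X y)"
      and h: "h = {(x,u),(y,v)}" unfolding g_def Pc_def by auto
    have "h \<in> EH" unfolding EH_iff using uv h e by (intro exI[of _ x] exI[of _ y] exI[of _ u] exI[of _ v]) simp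
    moreover have "\<exists>p q. h = {p,q} \<and> p \<in> X \<and> q \<notin> X"
    proof (cases "(x,u) \<in> X")
      case True
      then have "(y,v) \<notin> X" using uv by (auto simp: fib_def)
      then show ?thesis using True h by (intro exI[of _ "(x,u)"] exI[of _ "(y,v)"]) simp
    next
      case False
      then have "(y,v) \<in> X" using uv by (auto simp: fib_def)
      then show ?thesis using False h by (intro exI[of _ "(y,v)"] exI[of _ "(x,u)"]) (auto simp: insert_commute)
    qed
    moreover have "h \<in> layer {x,y}" unfolding layer_def using h xy by (intro CollectI exI[of _ "(x,u)"] exI[of _ "(y,v)"]) auto
    ultimately show "h \<in> bdry EH X \<inter> layer {x,y}" unfolding bdry_def by (intro IntI CollectI conjI)
  qed
  have fin: "finite (bdry EH X \<inter> layer {x,y})" using finEH by (simp add: bdry_def)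
  have "card (g ` Pc n (fib X x) (fib X y)) \<le> f X {x,y}"
    unfolding f_def by (rule card_mono[OF fin sub])
  then show ?thesis using card_image[OF inj] by simp
qed

lemma layer_upper:
  assumes e: "e \<in> E"
  shows "card (EH \<inter> layer e) \<le> n * n - n"
proof -
  obtain a b where ab: "a \<noteq> b" "e = {a,b}" using E_two e by blast
  define g where "g = (\<lambda>(u,v). {(a,u::nat),(b,v::nat)})"
  have "EH \<inter> layer e \<subseteq> g ` offd n"
  proof
    fix h assume h: "h \<in> EH \<inter> layer e"
    have "h \<in> EH" using h by blast
    then obtain x y u v where h1: "h = {(x,u),(y,v)}" "{x,y} \<in> E" "u < n" "v < n" "u \<noteq> v"
      unfolding EH_iff by blast
    obtain p q where h2: "h = {p,q}" "fst p \<in> e" "fst q \<in> e" "fst p \<noteq> fst q"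
      using h unfolding layer_def by blast
    have "{p,q} = {(x,u),(y,v)}" using h1(1) h2(1) by simp
    then have "(p = (x,u) \<and> q = (y,v)) \<or> (p = (y,v) \<and> q = (x,u))" by (simp add: doubleton_eq_iff)
    then have "{fst p, fst q} = {x,y}" by auto
    moreover have "e = {fst p, fst q}" using two_set_eq[OF ab(2) h2(2,3,4)] .
    ultimately have "{x,y} = {a,b}" using ab by simp
    then have "(x = a \<and> y = b) \<or> (x = b \<and> y = a)" by (auto simp: doubleton_eq_iff)
    then show "h \<in> g ` offd n"
    proof
      assume "x = a \<and> y = b"
      then have "h = g (u,v)" using h1 unfolding g_def by simp
      moreover have "(u,v) \<in> offd n" using h1 unfolding offd_def by auto
      ultimately show ?thesis by blast
    next
      assume "x = b \<and> y = a"
      then have "h = g (v,u)" using h1 unfolding g_def by (simp add: insert_commute)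
      moreover have "(v,u) \<in> offd n" using h1 unfolding offd_def by auto
      ultimately show ?thesis by blast
    qed
  qed
  then have "card (EH \<inter> layer e) \<le> card (g ` offd n)"
    by (intro card_mono finite_imageI finite_offd)
  also have "\<dots> \<le> card (offd n)" by (rule card_image_le[OF finite_offd])
  also have "\<dots> = n * n - n" by (rule card_offd)
  finally show ?thesis .
qed

end



lemma sum_lb: "(\<And>e. e \<in> F \<Longrightarrow> (k::nat) \<le> g e) \<Longrightarrow> card F * k \<le> sum g F"
  using sum_bounded_below[of F k g] by simp

lemma sum_lb_strict:
  assumes fin: "finite F" and le: "\<And>e. e \<in> F \<Longrightarrow> (k::nat) \<le> g e" and e0: "e0 \<in> F" "k < g e0"
  shows "card F * k < sum g F"
proof -
  have "sum g F = g e0 + sum g (F - {e0})" using sum.remove[OF fin e0(1)] .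
  moreover have "card (F - {e0}) * k \<le> sum g (F - {e0})" using le by (intro sum_lb) auto
  moreover have "card F = Suc (card (F - {e0}))" using fin e0(1) by (rule card_Suc_Diff1[symmetric])
  ultimately show ?thesis using e0(2) by simp
qed

lemma three_two: "3 \<le> (n::nat) \<Longrightarrow> \<exists>a b. a < n \<and> b < n \<and> a \<noteq> b \<and> a \<noteq> u \<and> b \<noteq> u"
  by presburger

context pg
begin

abbreviation "\<delta> \<equiv> min_degree V E"
abbreviation "\<kappa> \<equiv> edge_connectivity V E"

lemma inc_other: "e \<in> incident_edges E x \<Longrightarrow> \<exists>y. y \<noteq> x \<and> y \<in> V \<and> e = {x,y}"
proof -
  assume e: "e \<in> incident_edges E x"
  then have "e \<in> E" by (simp add: incident_edges_def)
  then obtain a b where ab: "a \<noteq> b" "a \<in> V" "b \<in> V" "e = {a,b}" using E_two by blast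
  have "x \<in> e" using e by (simp add: incident_edges_def)
  then show ?thesis using ab by (cases "x = a") (auto simp: insert_commute)
qed

lemma inc_sub: "incident_edges E x \<subseteq> E" by (auto simp: incident_edges_def)

lemma fin_inc: "finite (incident_edges E x)" using finE inc_sub finite_subset by blast

lemma delta_le: "x \<in> V \<Longrightarrow> \<delta> \<le> degree E x"
  unfolding min_degree_def by (rule Min_le) (auto simp: finV)

lemma delta_in: "V \<noteq> {} \<Longrightarrow> \<exists>x\<in>V. degree E x = \<delta>"
proof -
  assume "V \<noteq> {}"
  then have "\<delta> \<in> degree E ` V" unfolding min_degree_def by (intro Min_in) (auto simp: finV)
  then show ?thesis by auto
qed

lemma inc_lb:
  assumes x: "u0 \<in> fib X x" "u1 < n" "u1 \<notin> fib X x" and e: "e \<in> incident_edges E x"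
  shows "n - 1 \<le> f X e"
proof -
  obtain y where y: "e = {x,y}" using inc_other[OF e] by blast
  have eE: "{x,y} \<in> E" using e y by (simp add: incident_edges_def)
  have "n - 1 \<le> card (Pc n (fib X x) (fib X y))" by (rule F1[OF n3 fib_sub x])
  also have "\<dots> \<le> f X {x,y}" by (rule layer_Pc[OF eE])
  finally show ?thesis using y by simp
qed

lemma C1:
  assumes x: "u0 \<in> fib X x" "u1 < n" "u1 \<notin> fib X x"
  shows "degree E x * (n - 1) \<le> card (bdry EH X)"
proof -
  have "degree E x * (n - 1) \<le> (\<Sum>e\<in>incident_edges E x. f X e)"
    unfolding degree_def by (rule sum_lb) (rule inc_lb[OF x])
  also have "\<dots> \<le> card (bdry EH X)" by (rule sum_le[OF inc_sub])
  finally show ?thesis .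
qed

lemma fin_bdry: "finite (bdry EH X)" using finEH by (simp add: bdry_def)

lemma trivial_bound:
  assumes X: "X \<subseteq> VH" "p \<in> X" "q \<in> VH" "q \<notin> X"
    and triv: "\<forall>z\<in>V. fib X z = {} \<or> fib X z = {..<n}"
  shows "n * (n - 1) * \<kappa> \<le> card (bdry EH X)"
proof -
  define U where "U = {z\<in>V. fib X z = {..<n}}"
  have "fst p \<in> U"
  proof -
    have "snd p \<in> fib X (fst p)" using X by (auto simp: fib_def)
    moreover have "fst p \<in> V" using X by auto
    ultimately have "fib X (fst p) = {..<n}" using triv by blast
    then show ?thesis using \<open>fst p \<in> V\<close> unfolding U_def by blast
  qed
  moreover have "fst q \<in> V" "fst q \<notin> U"
  proof -
    show "fst q \<in> V" using X by auto
    have "snd q \<notin> fib X (fst q)" "snd q < n" using X by (auto simp: fib_def)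
    then show "fst q \<notin> U" unfolding U_def by auto
  qed
  ultimately have cut: "is_edge_cut V E (bdry E U)"
    by (intro X_to_cut[of U V "fst p" "fst q"]) (auto simp: U_def)
  have k: "\<kappa> \<le> card (bdry E U)" by (rule ec_le[OF finE cut])
  have each: "n * n - n \<le> f X e" if e: "e \<in> bdry E U" for e
  proof -
    obtain a b where ab: "e \<in> E" "e = {a,b}" "a \<in> U" "b \<notin> U" using e unfolding bdry_def by blast
    have bV: "b \<in> V" using E_ne ab by blast
    have fa: "fib X a = {..<n}" using ab unfolding U_def by blast
    have fb: "fib X b = {}" using triv bV ab unfolding U_def by blast
    have "n * n - n = card (Pc n (fib X a) (fib X b))" using fa fb Pc_empty_full card_offd by simp
    also have "\<dots> \<le> f X {a,b}" using layer_Pc ab by blast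
    finally show ?thesis using ab by simp
  qed
  have "card (bdry E U) * (n * n - n) \<le> (\<Sum>e\<in>bdry E U. f X e)"
    by (rule sum_lb) (rule each)
  also have "\<dots> \<le> card (bdry EH X)" by (rule sum_le) (auto simp: bdry_def)
  finally have "card (bdry E U) * (n * n - n) \<le> card (bdry EH X)" .
  moreover have "\<kappa> * (n * n - n) \<le> card (bdry E U) * (n * n - n)" using k by simp
  moreover have "n * (n - 1) * \<kappa> = \<kappa> * (n * n - n)" by (simp add: diff_mult_distrib2 mult.commute)
  ultimately show ?thesis by linarith
qed

lemma VH_ne: "V \<noteq> {} \<Longrightarrow> VH \<noteq> {}"
proof -
  assume "V \<noteq> {}"
  then obtain x where "x \<in> V" by blast
  moreover have "0 < n" using n3 by simp
  ultimately have "(x,0) \<in> VH" by simp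
  then show "VH \<noteq> {}" by blast
qed

lemma H_cut_lb:
  assumes "V \<noteq> {}" and S: "is_edge_cut VH EH S"
  shows "n * (n - 1) * \<kappa> \<le> card S \<or> (n - 1) * \<delta> \<le> card S"
proof -
  obtain X where X: "X \<subseteq> VH" "X \<noteq> {}" "VH - X \<noteq> {}" "bdry EH X \<subseteq> S"
    using cut_to_X[OF VH_ne[OF assms(1)] _ S] EH_sub by blast
  have finS: "finite S" using S finEH finite_subset unfolding is_edge_cut_def by blast
  have bS: "card (bdry EH X) \<le> card S" by (rule card_mono[OF finS X(4)])
  show ?thesis
  proof (cases "\<exists>x\<in>V. fib X x \<noteq> {} \<and> fib X x \<noteq> {..<n}")
    case True
    then obtain x where x: "x \<in> V" "fib X x \<noteq> {}" "fib X x \<noteq> {..<n}" by blast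
    obtain u0 where u0: "u0 \<in> fib X x" using x by blast
    obtain u1 where u1: "u1 < n" "u1 \<notin> fib X x" using x fib_sub by blast
    have "degree E x * (n - 1) \<le> card (bdry EH X)" by (rule C1[OF u0 u1])
    moreover have "\<delta> * (n - 1) \<le> degree E x * (n - 1)" using delta_le[OF x(1)] by (rule mult_le_mono1)
    ultimately have "\<delta> * (n - 1) \<le> card S" using bS by linarith
    then show ?thesis by (simp add: mult.commute)
  next
    case False
    obtain p where p: "p \<in> X" using X by blast
    obtain q where q: "q \<in> VH" "q \<notin> X" using X by blast
    have "n * (n - 1) * \<kappa> \<le> card (bdry EH X)"
      by (rule trivial_bound[OF X(1) p q]) (use False in blast)
    then show ?thesis using bS by simp
  qed
qed

lemma star_bdry: "p \<in> VH \<Longrightarrow> bdry EH {p} = incident_edges EH p"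
proof
  show "bdry EH {p} \<subseteq> incident_edges EH p" by (auto simp: bdry_def incident_edges_def)
  show "incident_edges EH p \<subseteq> bdry EH {p}"
  proof
    fix h assume h: "h \<in> incident_edges EH p"
    then have hE: "h \<in> EH" "p \<in> h" by (auto simp: incident_edges_def)
    obtain a b where ab: "a \<noteq> b" "h = {a,b}" using EH_two[OF hE(1)] by blast
    show "h \<in> bdry EH {p}"
    proof (cases "p = a")
      case True
      then show ?thesis unfolding bdry_def using hE ab by (intro CollectI conjI exI[of _ a] exI[of _ b]) auto
    next
      case False
      then have "p = b" using hE ab by auto
      then show ?thesis unfolding bdry_def using hE ab by (intro CollectI conjI exI[of _ b] exI[of _ a]) (auto simp: insert_commute)
    qed
  qed
qed

lemma bdry_compl:
  assumes X: "X \<subseteq> VH"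
  shows "bdry EH (VH - X) = bdry EH X"
proof
  show "bdry EH (VH - X) \<subseteq> bdry EH X"
  proof
    fix h assume "h \<in> bdry EH (VH - X)"
    then obtain p q where h: "h \<in> EH" "h = {p,q}" "p \<in> VH - X" "q \<notin> VH - X" unfolding bdry_def by blast
    have "q \<in> VH" using EH_sub h by blast
    then have "q \<in> X" using h by blast
    then show "h \<in> bdry EH X" unfolding bdry_def using h
      by (intro CollectI conjI exI[of _ q] exI[of _ p]) (auto simp: insert_commute)
  qed
  show "bdry EH X \<subseteq> bdry EH (VH - X)"
  proof
    fix h assume "h \<in> bdry EH X"
    then obtain p q where h: "h \<in> EH" "h = {p,q}" "p \<in> X" "q \<notin> X" unfolding bdry_def by blast
    have "q \<in> VH" using EH_sub h by blast
    then have "q \<in> VH - X" using h by blast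
    then show "h \<in> bdry EH (VH - X)" unfolding bdry_def using h
      by (intro CollectI conjI exI[of _ q] exI[of _ p]) (auto simp: insert_commute)
  qed
qed

lemma fib_compl: "fib (VH - X) x = (if x \<in> V then {..<n} - fib X x else {})"
  by (auto simp: fib_def)

lemma card_star:
  assumes "u < n"
  shows "card (incident_edges EH (x,u)) \<le> (n - 1) * degree E x"
proof -
  define N where "N = {y. {x,y} \<in> E}"
  have finN: "finite N"
  proof -
    have "N \<subseteq> V" unfolding N_def using E_ne by blast
    then show ?thesis using finV finite_subset by blast
  qed
  have sub: "incident_edges EH (x,u) \<subseteq> (\<Union>y\<in>N. (\<lambda>v. {(x,u),(y,v)}) ` ({..<n} - {u}))"
  proof
    fix h assume h: "h \<in> incident_edges EH (x,u)"
    then have hE: "h \<in> EH" "(x,u) \<in> h" by (auto simp: incident_edges_def)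
    then obtain x' y' u' v' where h1: "h = {(x',u'),(y',v')}" "{x',y'} \<in> E" "u' < n" "v' < n" "u' \<noteq> v'"
      unfolding EH_iff by blast
    have "(x,u) = (x',u') \<or> (x,u) = (y',v')" using hE(2) h1(1) by blast
    then show "h \<in> (\<Union>y\<in>N. (\<lambda>v. {(x,u),(y,v)}) ` ({..<n} - {u}))"
    proof
      assume a: "(x,u) = (x',u')"
      then have "y' \<in> N" "v' \<in> {..<n} - {u}" "h = {(x,u),(y',v')}" using h1 unfolding N_def by auto
      then show ?thesis by blast
    next
      assume a: "(x,u) = (y',v')"
      then have "x' \<in> N" "u' \<in> {..<n} - {u}" "h = {(x,u),(x',u')}" using h1 unfolding N_def
        by (auto simp: insert_commute)
      then show ?thesis by blast
    qed
  qed
  have "card (incident_edges EH (x,u)) \<le> card (\<Union>y\<in>N. (\<lambda>v. {(x,u),(y,v)}) ` ({..<n} - {u}))"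
    by (rule card_mono[OF _ sub]) (use finN in auto)
  also have "\<dots> \<le> (\<Sum>y\<in>N. card ((\<lambda>v. {(x,u),(y,v)}) ` ({..<n} - {u})))"
    by (rule card_UN_le[OF finN])
  also have "\<dots> \<le> (\<Sum>y\<in>N. n - 1)"
  proof (rule sum_mono)
    fix y assume "y \<in> N"
    have "card ((\<lambda>v. {(x,u),(y,v)}) ` ({..<n} - {u})) \<le> card ({..<n} - {u})" by (rule card_image_le) auto
    also have "\<dots> = n - 1" using assms by simp
    finally show "card ((\<lambda>v. {(x,u),(y,v)}) ` ({..<n} - {u})) \<le> n - 1" .
  qed
  also have "\<dots> = (n - 1) * card N" by simp
  also have "card N = degree E x"
  proof -
    have "inj_on (\<lambda>y. {x,y}) N" unfolding inj_on_def by (auto simp: doubleton_eq_iff)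
    moreover have "(\<lambda>y. {x,y}) ` N = incident_edges E x"
    proof
      show "(\<lambda>y. {x,y}) ` N \<subseteq> incident_edges E x" unfolding N_def incident_edges_def by auto
      show "incident_edges E x \<subseteq> (\<lambda>y. {x,y}) ` N"
      proof
        fix e assume e: "e \<in> incident_edges E x"
        then obtain y where y: "e = {x,y}" using inc_other by blast
        then have "y \<in> N" using e unfolding N_def incident_edges_def by auto
        then show "e \<in> (\<lambda>y. {x,y}) ` N" using y by blast
      qed
    qed
    ultimately show ?thesis unfolding degree_def by (metis card_image)
  qed
  finally show ?thesis .
qed

end



lemma K_iff_gen: "{u,v} \<in> K_edges m \<longleftrightarrow> u < m \<and> v < m \<and> u \<noteq> v"
  unfolding K_edges_def by (auto simp: doubleton_eq_iff)

locale pgc = pg +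
  assumes conn: "connected_graph V E" and cardV: "2 \<le> card V"
begin

lemma reach: "x \<in> V \<Longrightarrow> z \<in> V \<Longrightarrow> (rel V E)\<^sup>*\<^sup>* x z"
  using conn unfolding connected_graph_def by blast

lemma V_ne: "V \<noteq> {}" using cardV by auto

lemma other_vertex: "x \<in> V \<Longrightarrow> \<exists>z\<in>V. z \<noteq> x"
proof (rule ccontr)
  assume x: "x \<in> V" and "\<not> (\<exists>z\<in>V. z \<noteq> x)"
  then have "V = {x}" by blast
  then show False using cardV by simp
qed

lemma deg_pos: "x \<in> V \<Longrightarrow> 1 \<le> degree E x"
proof -
  assume x: "x \<in> V"
  obtain z where z: "z \<in> V" "z \<noteq> x" using other_vertex[OF x] by blast
  have "(rel V E)\<^sup>*\<^sup>* x z" using reach x z by blast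
  then obtain y where "rel V E x y" using z(2) by (cases rule: converse_rtranclpE) auto
  then have "{x,y} \<in> incident_edges E x" by (simp add: adj_def incident_edges_def)
  then have "incident_edges E x \<noteq> {}" by blast
  then show ?thesis unfolding degree_def using fin_inc by (simp add: Suc_le_eq card_gt_0_iff)
qed

lemma delta_pos: "1 \<le> \<delta>"
  using delta_in[OF V_ne] deg_pos by metis

lemma G_cut: "is_edge_cut V E E"
proof -
  obtain x where x: "x \<in> V" using V_ne by blast
  obtain z where z: "z \<in> V" "z \<noteq> x" using other_vertex[OF x] by blast
  have "\<not> (rel V (E - E))\<^sup>*\<^sup>* x z"
  proof
    assume "(rel V (E - E))\<^sup>*\<^sup>* x z"
    then show False using z(2) by (cases rule: converse_rtranclpE) (auto simp: adj_def)
  qed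
  then show ?thesis unfolding is_edge_cut_def connected_graph_def using x z by blast
qed

lemma inc_single: "x \<in> V \<Longrightarrow> {x,y} \<in> E \<Longrightarrow> degree E x = 1 \<Longrightarrow> incident_edges E x = {{x,y}}"
proof -
  assume a: "{x,y} \<in> E" "degree E x = 1"
  then obtain e where e: "incident_edges E x = {e}" unfolding degree_def by (metis card_1_singletonE)
  have "{x,y} \<in> incident_edges E x" using a by (simp add: incident_edges_def)
  then show ?thesis using e by simp
qed

lemma K2:
  assumes xy: "{x,y} \<in> E" and dx: "degree E x = 1" and dy: "degree E y = 1"
  shows "graph_iso V E (K_verts 2) (K_edges 2)"
proof -
  have x: "x \<in> V" "y \<in> V" "x \<noteq> y" using E_ne xy by auto
  have ix: "incident_edges E x = {{x,y}}" using inc_single x(1) xy dx by blast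
  have iy: "incident_edges E y = {{x,y}}" using inc_single[of y x] x(2) xy dy by (simp add: insert_commute)
  have Vxy: "V = {x,y}"
  proof
    show "{x,y} \<subseteq> V" using x by auto
    show "V \<subseteq> {x,y}"
    proof
      fix z assume z: "z \<in> V"
      have "(rel V E)\<^sup>*\<^sup>* x z" using reach x z by blast
      then show "z \<in> {x,y}"
      proof (induction rule: rtranclp_induct)
        case base then show ?case by simp
      next
        case (step w z')
        have "{w,z'} \<in> incident_edges E w" using step(2) by (simp add: adj_def incident_edges_def)
        then have "{w,z'} = {x,y}" using step(3) ix iy by auto
        then show ?case by (auto simp: doubleton_eq_iff)
      qed
    qed
  qed
  define g where "g = (\<lambda>z. if z = x then 0 else (1::nat))"
  have bij: "bij_betw g V (K_verts 2)"
    unfolding bij_betw_def inj_on_def Vxy K_verts_def g_def using x(3) by auto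
  have edges: "\<forall>a\<in>V. \<forall>b\<in>V. {a,b} \<in> E \<longleftrightarrow> {g a, g b} \<in> K_edges 2"
  proof (intro ballI)
    fix a b assume ab: "a \<in> V" "b \<in> V"
    have "{g a, g b} \<in> K_edges 2 \<longleftrightarrow> a \<noteq> b"
      using ab Vxy x(3) unfolding K_iff_gen g_def by auto
    moreover have "{a,b} \<in> E \<longleftrightarrow> a \<noteq> b"
    proof
      assume "{a,b} \<in> E" then show "a \<noteq> b" using E_ne by blast
    next
      assume "a \<noteq> b"
      then have "{a,b} = {x,y}" using ab Vxy by auto
      then show "{a,b} \<in> E" using xy by simp
    qed
    ultimately show "{a,b} \<in> E \<longleftrightarrow> {g a, g b} \<in> K_edges 2" by simp
  qed
  show ?thesis unfolding graph_iso_def using bij edges by blast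
qed

end



context pgc
begin

lemma one_partial:
  assumes x: "x \<in> V" "u0 \<in> fib X x" "u1 < n" "u1 \<notin> fib X x"
    and triv: "\<forall>z\<in>V. z \<noteq> x \<longrightarrow> fib X z = {} \<or> fib X z = {..<n}"
    and y0: "{x,y0} \<in> E" and fy0: "fib X y0 = {}"
    and XV: "X \<subseteq> VH"
  shows "degree E x * (n - 1) < card (bdry EH X) \<or> (\<exists>u. X = {(x,u)})"
proof -
  let ?F = "incident_edges E x"
  have lb: "\<And>e. e \<in> ?F \<Longrightarrow> n - 1 \<le> f X e" using inc_lb[OF x(2,3,4)] .
  have strict: "degree E x * (n - 1) < card (bdry EH X)" if e0: "e0 \<in> ?F" "n - 1 < f X e0" for e0
  proof -
    have "degree E x * (n - 1) < (\<Sum>e\<in>?F. f X e)" unfolding degree_def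
      by (rule sum_lb_strict[where k="n - 1" and g="f X", OF fin_inc[of x] lb e0])
    also have "\<dots> \<le> card (bdry EH X)" by (rule sum_le[OF inc_sub])
    finally show ?thesis .
  qed
  have y0F: "{x,y0} \<in> ?F" using y0 by (simp add: incident_edges_def)
  show ?thesis
  proof (cases "\<exists>u. fib X x = {u}")
    case False
    then obtain u' where u': "u' \<in> fib X x" "u0 \<noteq> u'" using x(2) by blast
    have "n \<le> card (Pc n (fib X x) {})" by (rule F3[OF fib_sub x(2) u'(1) u'(2) x(3,4)])
    also have "\<dots> \<le> f X {x,y0}" using layer_Pc[OF y0, of X] fy0 by simp
    finally have "n - 1 < f X {x,y0}" using n3 by linarith
    then show ?thesis using strict y0F by blast
  next
    case True
    then obtain u where u: "fib X x = {u}" by blast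
    show ?thesis
    proof (cases "\<exists>y1. {x,y1} \<in> E \<and> fib X y1 = {..<n}")
      case True
      then obtain y1 where y1: "{x,y1} \<in> E" "fib X y1 = {..<n}" by blast
      obtain a b where ab: "a < n" "b < n" "a \<noteq> b" "a \<noteq> u" "b \<noteq> u" using three_two[OF n3] by blast
      have "n \<le> card (Pc n (fib X x) {..<n})"
        by (rule F3'[OF fib_sub ab(1,2) _ _ ab(3)]) (use ab u in auto)
      also have "\<dots> \<le> f X {x,y1}" using layer_Pc[OF y1(1), of X] y1(2) by simp
      finally have "n - 1 < f X {x,y1}" using n3 by linarith
      moreover have "{x,y1} \<in> ?F" using y1 by (simp add: incident_edges_def)
      ultimately show ?thesis using strict by blast
    next
      case nofull: False
      have nb: "fib X y = {}" if yE: "{x,y} \<in> E" for y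
      proof -
        have "y \<in> V" "y \<noteq> x" using E_ne yE by auto
        then show ?thesis using triv nofull yE by blast
      qed
      show ?thesis
      proof (cases "\<exists>w z. {w,z} \<in> E \<and> w \<noteq> x \<and> z \<noteq> x \<and> fib X w = {} \<and> fib X z = {..<n}")
        case True
        then obtain w z where wz: "{w,z} \<in> E" "w \<noteq> x" "z \<noteq> x" "fib X w = {}" "fib X z = {..<n}" by blast
        have "card (Pc n (fib X w) (fib X z)) \<le> f X {w,z}" by (rule layer_Pc[OF wz(1)])
        then have "n * n - n \<le> f X {w,z}" using wz(4,5) Pc_empty_full card_offd by simp
        moreover have "3 * n \<le> n * n" using n3 by simp
        ultimately have pos: "1 \<le> f X {w,z}" using n3 by linarith
        have notin: "{w,z} \<notin> ?F" using wz by (auto simp: incident_edges_def)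
        have "degree E x * (n - 1) \<le> (\<Sum>e\<in>?F. f X e)" unfolding degree_def by (rule sum_lb) (rule lb)
        also have "\<dots> < f X {w,z} + (\<Sum>e\<in>?F. f X e)" using pos by linarith
        also have "\<dots> = (\<Sum>e\<in>insert {w,z} ?F. f X e)" using notin fin_inc by simp
        also have "\<dots> \<le> card (bdry EH X)" by (rule sum_le) (use wz(1) inc_sub in auto)
        finally show ?thesis by blast
      next
        case noedge: False
        have allz: "z = x \<or> fib X z = {}" if z: "z \<in> V" for z
        proof -
          have "(rel V E)\<^sup>*\<^sup>* x z" using reach x(1) z by blast
          then show ?thesis
          proof (induction rule: rtranclp_induct)
            case base then show ?case by simp
          next
            case (step w z')
            have wz: "{w,z'} \<in> E" "z' \<in> V" using step(2) by (auto simp: adj_def)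
            show ?case
            proof (cases "z' = x")
              case True then show ?thesis by simp
            next
              case zx: False
              show ?thesis
              proof (cases "w = x")
                case True then show ?thesis using nb wz(1) by blast
              next
                case False
                then have "fib X w = {}" using step(3) by blast
                moreover have "fib X z' = {} \<or> fib X z' = {..<n}" using triv wz(2) zx by blast
                ultimately show ?thesis using noedge wz(1) False zx by blast
              qed
            qed
          qed
        qed
        have "X = {(x,u)}"
        proof
          show "X \<subseteq> {(x,u)}"
          proof
            fix p assume p: "p \<in> X"
            obtain a b where ab: "p = (a,b)" by (cases p)
            have aV: "a \<in> V" "b < n" using p ab XV by auto
            then have bf: "b \<in> fib X a" using p ab by (simp add: fib_def)
            then have "a = x" using allz aV(1) by blast
            then have "b = u" using bf u by simp
            then show "p \<in> {(x,u)}" using ab \<open>a = x\<close> by simp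
          qed
          have "u \<in> fib X x" using u by simp
          then show "{(x,u)} \<subseteq> X" by (simp add: fib_def)
        qed
        then show ?thesis by blast
      qed
    qed
  qed
qed

lemma inc_inter: "x \<noteq> y \<Longrightarrow> e \<in> incident_edges E x \<Longrightarrow> e \<in> incident_edges E y \<Longrightarrow> e = {x,y}"
proof -
  assume a: "x \<noteq> y" "e \<in> incident_edges E x" "e \<in> incident_edges E y"
  then have e: "e \<in> E" "x \<in> e" "y \<in> e" by (auto simp: incident_edges_def)
  obtain p q where "e = {p,q}" using E_two e(1) by blast
  then show "e = {x,y}" using two_set_eq e(2,3) a(1) by blast
qed

lemma two_partial:
  assumes K: "\<not> (graph_iso V E (K_verts 2) (K_edges 2) \<and> n = 3)"
    and x: "x \<in> V" "u0 \<in> fib X x" "u1 < n" "u1 \<notin> fib X x"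
    and y: "y \<in> V" "w0 \<in> fib X y" "w1 < n" "w1 \<notin> fib X y" and xy: "x \<noteq> y"
  shows "(n - 1) * \<delta> < card (bdry EH X)"
proof -
  have dx: "\<delta> * (n - 1) \<le> degree E x * (n - 1)" using delta_le[OF x(1)] by (rule mult_le_mono1)
  have dy: "\<delta> * (n - 1) \<le> degree E y * (n - 1)" using delta_le[OF y(1)] by (rule mult_le_mono1)
  have dpos: "1 \<le> \<delta>" by (rule delta_pos)
  have npos: "2 \<le> n - 1" using n3 by simp
  have pos: "2 \<le> \<delta> * (n - 1)" using mult_le_mono[OF dpos npos] by simp
  let ?F = "incident_edges E x \<union> incident_edges E y"
  have finF: "finite ?F" using fin_inc by simp
  have lbF: "\<And>e. e \<in> ?F \<Longrightarrow> n - 1 \<le> f X e" using inc_lb[OF x(2,3,4)] inc_lb[OF y(2,3,4)] by blast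
  have sF: "(\<Sum>e\<in>?F. f X e) \<le> card (bdry EH X)" by (rule sum_le) (use inc_sub in blast)
  show ?thesis
  proof (cases "{x,y} \<in> E")
    case False
    have disj: "incident_edges E x \<inter> incident_edges E y = {}"
    proof (rule ccontr)
      assume "incident_edges E x \<inter> incident_edges E y \<noteq> {}"
      then obtain e where e: "e \<in> incident_edges E x" "e \<in> incident_edges E y" by blast
      then have "e = {x,y}" using inc_inter xy by blast
      then show False using False e by (simp add: incident_edges_def)
    qed
    have "(\<Sum>e\<in>?F. f X e) = (\<Sum>e\<in>incident_edges E x. f X e) + (\<Sum>e\<in>incident_edges E y. f X e)"
      by (rule sum.union_disjoint[OF fin_inc fin_inc disj])
    moreover have "degree E x * (n - 1) \<le> (\<Sum>e\<in>incident_edges E x. f X e)"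
      unfolding degree_def by (rule sum_lb) (rule inc_lb[OF x(2,3,4)])
    moreover have "degree E y * (n - 1) \<le> (\<Sum>e\<in>incident_edges E y. f X e)"
      unfolding degree_def by (rule sum_lb) (rule inc_lb[OF y(2,3,4)])
    ultimately have "\<delta> * (n - 1) < card (bdry EH X)" using sF dx dy pos by linarith
    then show ?thesis by (simp add: mult.commute)
  next
    case True
    have eF: "{x,y} \<in> ?F" using True by (simp add: incident_edges_def)
    show ?thesis
    proof (cases "\<delta> + 2 \<le> degree E x + degree E y")
      case True
      have int: "incident_edges E x \<inter> incident_edges E y = {{x,y}}"
        using inc_inter xy eF \<open>{x,y} \<in> E\<close> by (auto simp: incident_edges_def)
      have "card ?F + card (incident_edges E x \<inter> incident_edges E y) = degree E x + degree E y"
        unfolding degree_def using card_Un_Int[OF fin_inc[of x] fin_inc[of y]] by simp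
      then have cF: "card ?F + 1 = degree E x + degree E y" using int by simp
      have "card ?F * (n - 1) \<le> (\<Sum>e\<in>?F. f X e)" by (rule sum_lb) (rule lbF)
      moreover have "(\<delta> + 1) * (n - 1) \<le> card ?F * (n - 1)" using cF True by (intro mult_le_mono1) linarith
      ultimately have "(\<delta> + 1) * (n - 1) \<le> card (bdry EH X)" using sF by linarith
      then have "\<delta> * (n - 1) < card (bdry EH X)" using npos by simp
      then show ?thesis by (simp add: mult.commute)
    next
      case False
      have "\<delta> \<le> degree E x" "\<delta> \<le> degree E y" using delta_le x(1) y(1) by auto
      then have d1: "degree E x = 1" "degree E y = 1" "\<delta> = 1" using False dpos by linarith+
      have "graph_iso V E (K_verts 2) (K_edges 2)" by (rule K2[OF \<open>{x,y} \<in> E\<close> d1(1,2)])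
      then have n4: "4 \<le> n" using K n3 by linarith
      have "n \<le> card (Pc n (fib X x) (fib X y))" by (rule F2[OF n4 fib_sub x(2,3,4) fib_sub y(2,3,4)])
      also have "\<dots> \<le> f X {x,y}" by (rule layer_Pc[OF \<open>{x,y} \<in> E\<close>])
      also have "\<dots> = (\<Sum>e\<in>{{x,y}}. f X e)" by simp
      also have "\<dots> \<le> card (bdry EH X)" by (rule sum_le) (use \<open>{x,y} \<in> E\<close> in simp)
      finally have "n \<le> card (bdry EH X)" .
      moreover have "(n - 1) * \<delta> = n - 1" using d1(3) by simp
      ultimately show ?thesis using n3 by linarith
    qed
  qed
qed

end



context pgc
begin

lemma main_super:
  assumes hyp: "\<delta> < n * \<kappa>" and K: "\<not> (graph_iso V E (K_verts 2) (K_edges 2) \<and> n = 3)"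
    and S: "is_min_edge_cut VH EH S"
  shows "\<exists>p\<in>VH. S = incident_edges EH p"
proof -
  have Scut: "is_edge_cut VH EH S" and Scard: "card S = edge_connectivity VH EH"
    using S by (auto simp: is_min_edge_cut_def)
  have finS: "finite S" using Scut finEH finite_subset unfolding is_edge_cut_def by blast
  obtain x0 where x0: "x0 \<in> V" "degree E x0 = \<delta>" using delta_in V_ne by blast
  have p0: "(x0,0) \<in> VH" using x0 n3 by simp
  have q0: "(x0,1::nat) \<in> VH" "(x0,1::nat) \<notin> {(x0,0)}" using x0 n3 by auto
  have "is_edge_cut VH EH (bdry EH {(x0,0)})"
    by (rule X_to_cut[of "{(x0,0)}" VH "(x0,0)" "(x0,1)"]) (use p0 q0 in auto)
  then have starcut: "is_edge_cut VH EH (incident_edges EH (x0,0))" using star_bdry[OF p0] by simp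
  have "card S \<le> card (incident_edges EH (x0,0))" using ec_le[OF finEH starcut] Scard by simp
  also have "\<dots> \<le> (n - 1) * degree E x0" by (rule card_star) (use n3 in simp)
  finally have Sle: "card S \<le> (n - 1) * \<delta>" using x0 by simp
  have "(n - 1) * \<delta> < (n - 1) * (n * \<kappa>)" by (rule mult_less_mono2[OF hyp]) (use n3 in simp)
  then have lt: "(n - 1) * \<delta> < n * (n - 1) * \<kappa>" by (simp add: mult_ac)
  obtain X where X: "X \<subseteq> VH" "X \<noteq> {}" "VH - X \<noteq> {}" "bdry EH X \<subseteq> S"
    using cut_to_X[OF VH_ne[OF V_ne] _ Scut] EH_sub by blast
  have bS: "card (bdry EH X) \<le> card S" by (rule card_mono[OF finS X(4)])
  show ?thesis
  proof (cases "\<exists>x\<in>V. fib X x \<noteq> {} \<and> fib X x \<noteq> {..<n}")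
    case False
    obtain p where p: "p \<in> X" using X by blast
    obtain q where q: "q \<in> VH" "q \<notin> X" using X by blast
    have "n * (n - 1) * \<kappa> \<le> card (bdry EH X)"
      by (rule trivial_bound[OF X(1) p q]) (use False in blast)
    then show ?thesis using bS Sle lt by linarith
  next
    case True
    then obtain x where x: "x \<in> V" "fib X x \<noteq> {}" "fib X x \<noteq> {..<n}" by blast
    obtain u0 where u0: "u0 \<in> fib X x" using x by blast
    obtain u1 where u1: "u1 < n" "u1 \<notin> fib X x" using x fib_sub by blast
    have C1x: "degree E x * (n - 1) \<le> card (bdry EH X)" by (rule C1[OF u0 u1])
    have dx: "\<delta> * (n - 1) \<le> degree E x * (n - 1)" using delta_le[OF x(1)] by (rule mult_le_mono1)
    have fin_step: ?thesis if Z: "Z \<subseteq> VH" "bdry EH Z = bdry EH X"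
      and alt: "degree E x * (n - 1) < card (bdry EH Z) \<or> (\<exists>u. Z = {(x,u)})" for Z
    proof -
      from alt show ?thesis
      proof
        assume a: "degree E x * (n - 1) < card (bdry EH Z)"
        have "card S \<le> \<delta> * (n - 1)" using Sle by (simp add: mult.commute)
        moreover have "card (bdry EH Z) = card (bdry EH X)" using Z(2) by simp
        ultimately have False using a dx bS by linarith
        then show ?thesis ..
      next
        assume "\<exists>u. Z = {(x,u)}"
        then obtain u where u: "Z = {(x,u)}" by blast
        have pV: "(x,u) \<in> VH" using Z(1) u by blast
        have eq: "bdry EH X = incident_edges EH (x,u)" using star_bdry[OF pV] Z(2) u by simp
        have "card S \<le> \<delta> * (n - 1)" using Sle by (simp add: mult.commute)
        then have "card S \<le> card (bdry EH X)" using dx C1x by linarith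
        then have "card (bdry EH X) = card S" using bS by simp
        then have "bdry EH X = S" by (rule card_subset_eq[OF finS X(4)])
        then show ?thesis using eq pV by blast
      qed
    qed
    show ?thesis
    proof (cases "\<exists>y\<in>V. y \<noteq> x \<and> fib X y \<noteq> {} \<and> fib X y \<noteq> {..<n}")
      case True
      then obtain y where y: "y \<in> V" "y \<noteq> x" "fib X y \<noteq> {}" "fib X y \<noteq> {..<n}" by blast
      obtain w0 where w0: "w0 \<in> fib X y" using y by blast
      obtain w1 where w1: "w1 < n" "w1 \<notin> fib X y" using y fib_sub by blast
      have "(n - 1) * \<delta> < card (bdry EH X)"
        by (rule two_partial[OF K x(1) u0 u1 y(1) w0 w1]) (use y in auto)
      then show ?thesis using bS Sle by linarith
    next
      case False
      then have triv: "\<forall>z\<in>V. z \<noteq> x \<longrightarrow> fib X z = {} \<or> fib X z = {..<n}" by blast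
      have "incident_edges E x \<noteq> {}" using deg_pos[OF x(1)] unfolding degree_def by auto
      then obtain e where "e \<in> incident_edges E x" by blast
      then obtain y0 where "e = {x,y0}" using inc_other by blast
      then have y0: "{x,y0} \<in> E" using \<open>e \<in> incident_edges E x\<close> by (simp add: incident_edges_def)
      have y0V: "y0 \<in> V" "y0 \<noteq> x" using E_ne y0 by auto
      have "fib X y0 = {} \<or> fib X y0 = {..<n}" using triv y0V by blast
      then show ?thesis
      proof
        assume f0: "fib X y0 = {}"
        show ?thesis by (rule fin_step[OF X(1) refl one_partial[OF x(1) u0 u1 triv y0 f0 X(1)]])
      next
        assume f0: "fib X y0 = {..<n}"
        let ?Y = "VH - X"
        have fY: "\<And>z. z \<in> V \<Longrightarrow> fib ?Y z = {..<n} - fib X z" using fib_compl by simp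
        have YV: "?Y \<subseteq> VH" by blast
        have u1': "u1 \<in> fib ?Y x" using fY[OF x(1)] u1 by simp
        have u0': "u0 < n" "u0 \<notin> fib ?Y x" using fY[OF x(1)] u0 fib_sub by auto
        have triv': "\<forall>z\<in>V. z \<noteq> x \<longrightarrow> fib ?Y z = {} \<or> fib ?Y z = {..<n}"
        proof (intro ballI impI)
          fix z assume z: "z \<in> V" "z \<noteq> x"
          then have "fib X z = {} \<or> fib X z = {..<n}" using triv by blast
          then show "fib ?Y z = {} \<or> fib ?Y z = {..<n}" using fY[OF z(1)] by auto
        qed
        have f0': "fib ?Y y0 = {}" using fY[OF y0V(1)] f0 by simp
        show ?thesis
          by (rule fin_step[OF YV bdry_compl[OF X(1)] one_partial[OF x(1) u1' u0' triv' y0 f0' YV]])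
      qed
    qed
  qed
qed

lemma main_not_super:
  assumes hyp: "\<not> \<delta> < n * \<kappa>"
  shows "\<not> super_edge_connected VH EH"
proof
  assume sup: "super_edge_connected VH EH"
  obtain SG where SG: "is_edge_cut V E SG" "card SG = \<kappa>" using ec_attained[OF finE G_cut] by blast
  have EV: "\<forall>h\<in>E. h \<subseteq> V"
  proof
    fix h assume "h \<in> E"
    then obtain x y where "x \<in> V" "y \<in> V" "h = {x,y}" using E_two by blast
    then show "h \<subseteq> V" by simp
  qed
  obtain U where U: "U \<subseteq> V" "U \<noteq> {}" "V - U \<noteq> {}" "bdry E U \<subseteq> SG"
    using cut_to_X[OF V_ne EV SG(1)] by blast
  have finSG: "finite SG" using SG finE finite_subset unfolding is_edge_cut_def by blast
  have bU: "card (bdry E U) \<le> \<kappa>" using card_mono[OF finSG U(4)] SG(2) by simp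
  obtain a where a: "a \<in> U" using U by blast
  obtain b where b: "b \<in> V" "b \<notin> U" using U by blast
  define XU where "XU = U \<times> {..<n}"
  have XU: "XU \<subseteq> VH" "(a,0) \<in> XU" "(b,0) \<in> VH" "(b,0) \<notin> XU" using U a b n3 by (auto simp: XU_def)
  let ?S = "bdry EH XU"
  have Scut: "is_edge_cut VH EH ?S" by (rule X_to_cut[OF XU])
  have Sle: "card ?S \<le> n * (n - 1) * \<kappa>"
  proof -
    have sub: "?S \<subseteq> (\<Union>e\<in>bdry E U. EH \<inter> layer e)"
    proof
      fix h assume "h \<in> ?S"
      then obtain p q where h: "h \<in> EH" "h = {p,q}" "p \<in> XU" "q \<notin> XU" unfolding bdry_def by blast
      have qV: "q \<in> VH" using EH_sub h by blast
      have pU: "fst p \<in> U" using h(3) unfolding XU_def by (cases p) simp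
      have qU: "fst q \<notin> U" using qV h(4) unfolding XU_def by (cases q) simp
      have neq: "fst p \<noteq> fst q" using pU qU by metis
      from h(1) obtain x y u v where h1: "h = {(x,u),(y,v)}" "{x,y} \<in> E" unfolding EH_iff by blast
      have "{p,q} = {(x,u),(y,v)}" using h h1 by simp
      then have "(p = (x,u) \<and> q = (y,v)) \<or> (p = (y,v) \<and> q = (x,u))" by (simp add: doubleton_eq_iff)
      then have eE: "{fst p, fst q} \<in> E" using h1(2) by (elim disjE) (simp_all add: insert_commute)
      have "{fst p, fst q} \<in> bdry E U" unfolding bdry_def
        by (intro CollectI conjI exI[of _ "fst p"] exI[of _ "fst q"]) (simp_all add: eE pU qU)
      moreover have "h \<in> layer {fst p, fst q}" unfolding layer_def
        by (intro CollectI conjI exI[of _ p] exI[of _ q]) (simp_all add: h(2) neq)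
      ultimately show "h \<in> (\<Union>e\<in>bdry E U. EH \<inter> layer e)" using h(1) by blast
    qed
    have finB: "finite (bdry E U)" using finE by (simp add: bdry_def)
    have "card ?S \<le> card (\<Union>e\<in>bdry E U. EH \<inter> layer e)" by (rule card_mono[OF _ sub]) (use finB finEH in auto)
    also have "\<dots> \<le> (\<Sum>e\<in>bdry E U. card (EH \<inter> layer e))" by (rule card_UN_le[OF finB])
    also have "\<dots> \<le> (\<Sum>e\<in>bdry E U. n * n - n)" by (rule sum_mono) (rule layer_upper, auto simp: bdry_def)
    also have "\<dots> = card (bdry E U) * (n * n - n)" by simp
    also have "\<dots> \<le> \<kappa> * (n * n - n)" using bU by simp
    also have "\<dots> = n * (n - 1) * \<kappa>" by (simp add: diff_mult_distrib2 mult.commute)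
    finally show ?thesis .
  qed
  have lamge: "n * (n - 1) * \<kappa> \<le> edge_connectivity VH EH"
  proof (rule ec_ge[OF finEH Scut])
    fix S' assume S': "is_edge_cut VH EH S'"
    have "n * (n - 1) * \<kappa> \<le> card S' \<or> (n - 1) * \<delta> \<le> card S'" by (rule H_cut_lb[OF V_ne S'])
    moreover have "(n - 1) * (n * \<kappa>) \<le> (n - 1) * \<delta>" using hyp by simp
    then have "n * (n - 1) * \<kappa> \<le> (n - 1) * \<delta>" by (simp add: mult_ac)
    ultimately show "n * (n - 1) * \<kappa> \<le> card S'" by linarith
  qed
  have "edge_connectivity VH EH \<le> card ?S" by (rule ec_le[OF finEH Scut])
  then have min: "is_min_edge_cut VH EH ?S" unfolding is_min_edge_cut_def using Scut Sle lamge by simp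
  then obtain p where p: "p \<in> VH" "?S = incident_edges EH p" using sup unfolding super_edge_connected_def by blast
  have aV: "a \<in> V" using a U by blast
  obtain x y where xy: "{x,y} \<in> E" "x \<in> U" "y \<notin> U" using path_cross[OF reach[OF aV b(1)] a b(2)] by blast
  have xney: "x \<noteq> y" using xy by blast
  have n1: "0 < n" "1 < n" using n3 by auto
  have e1: "{(x,0),(y,1)} \<in> EH" unfolding EH_iff using xy n1
    by (intro exI[of _ x] exI[of _ y] exI[of _ 0] exI[of _ 1]) simp
  have e2: "{(x,1),(y,0)} \<in> EH" unfolding EH_iff using xy n1
    by (intro exI[of _ x] exI[of _ y] exI[of _ 1] exI[of _ 0]) simp
  have h1: "{(x,0),(y,1)} \<in> ?S" unfolding bdry_def using e1 xy n1
    by (intro CollectI conjI exI[of _ "(x,0)"] exI[of _ "(y,1)"]) (auto simp: XU_def)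
  have h2: "{(x,1),(y,0)} \<in> ?S" unfolding bdry_def using e2 xy n1
    by (intro CollectI conjI exI[of _ "(x,1)"] exI[of _ "(y,0)"]) (auto simp: XU_def)
  have "p \<in> {(x,0),(y,1)}" "p \<in> {(x,1),(y,0)}" using p(2) h1 h2 by (auto simp: incident_edges_def)
  then show False using xney by auto
qed

end


theorem corollary2:
  fixes V :: "'a set" and E :: "'a set set" and n :: nat
  assumes "simple_graph V E"
    and "connected_graph V E"
    and "card V \<ge> 2"
    and "n \<ge> 3"
    and "\<not> (graph_iso V E (K_verts 2) (K_edges 2) \<and> n = 3)"
  shows "super_edge_connected (dprod_verts V (K_verts n)) (dprod_edges E (K_edges n))
     \<longleftrightarrow> n * edge_connectivity V E > min_degree V E"
proof -
  interpret pgc V E n using assms by unfold_locales auto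
  have VH: "dprod_verts V (K_verts n) = V \<times> {..<n}" by (simp add: dprod_verts_def K_verts_def)
  show ?thesis
  proof
    assume "super_edge_connected (dprod_verts V (K_verts n)) (dprod_edges E (K_edges n))"
    then show "n * edge_connectivity V E > min_degree V E" using main_not_super VH by metis
  next
    assume h: "n * edge_connectivity V E > min_degree V E"
    show "super_edge_connected (dprod_verts V (K_verts n)) (dprod_edges E (K_edges n))"
      unfolding VH super_edge_connected_def using main_super[OF h assms(5)] by blast
  qed
qed

end
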